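(* Let $\mathcal F\subseteq\{\mathcal X\to[0,1]\}$ be a hypothesis class. Then for all integers $T,k\ge1$, $$\underline{\mathcal R}_T^{kT}(\mathcal F)\le\inf_{\epsilon>0}\Big\{\sup_{Z\subseteq\mathcal X,\,|Z|=kT}\log\mathcal N(\mathcal F|_Z,\epsilon)+2\epsilon T\Big\}.$$
   Context: Setting: contexts $\mathcal X$, labels $\{0,1\}$, log loss. For $f\in\mathcal F$, $p_f(1\mid x)=f(x)$, $p_f(0\mid x)=1-f(x)$; learner actions $a$ are pmfs on $\{0,1\}$ with loss $\ell(a,(x,y))=-\log a(y)$, and $f$ incurs $-\log p_f(y\mid x)$. Regret: $\mathcal R(\mathcal F,x_{1:T},y_{1:T},a_{1:T})=\sum_{t}\ell(a_t,(x_t,y_t))-\inf_{f\in\mathcal F}\sum_t(-\log p_f(y_t\mid x_t))$. For finite $X\subseteq\mathcal X$, $\underline{\mathcal R}_T(\mathcal F,X)=\max_{x_1\in X}\inf_{a_1}\sup_{y_1}\cdots\max_{x_T\in X}\inf_{a_T}\sup_{y_T}\mathcal R(\mathcal F,x_{1:T},y_{1:T},a_{1:T})$ and $\underline{\mathcal R}_T^M(\mathcal F)=\max_{|X|=M}\underline{\mathcal R}_T(\mathcal F,X)$. For a class $\mathcal G$ of functions on a set $Z$, a set $\tilde{\mathcal G}$ is an $\epsilon$-covering if for every $g\in\mathcal G$ there is $\tilde g\in\tilde{\mathcal G}$ with $\sup_{x\in Z}|g(x)-\tilde g(x)|\le\epsilon$; $\mathcal N(\mathcal G,\epsilon)$ is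 the minimal size of such a covering. $\mathcal F|_Z$ is the restriction of $\mathcal F$ to $Z$. Logarithms are natural. *)

theory Defs
  imports "HOL-Analysis.Analysis"
begin

text \<open>Labels are booleans (True = label 1). A pmf on {0,1} is identified with
  its mass q = a(1) \<in> [0,1]. prob_of q y is the probability of label y.\<close>

definition prob_of :: "real \<Rightarrow> bool \<Rightarrow> real" where
  "prob_of q y = (if y then q else 1 - q)"

definition nll :: "real \<Rightarrow> bool \<Rightarrow> ereal" where
  "nll q y = (if prob_of q y = 0 then \<infinity> else ereal (- ln (prob_of q y)))"

text \<open>A history entry is (x_t, a_t, y_t) with a_t the learner's mass on label 1.\<close>
definition learner_loss :: "('x \<times> real \<times> bool) list \<Rightarrow> ereal" where
  "learner_loss h = (\<Sum>(x,a,y)\<leftarrow>h. nll a y)"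

definition hyp_loss :: "('x \<Rightarrow> real) \<Rightarrow> ('x \<times> real \<times> bool) list \<Rightarrow> ereal" where
  "hyp_loss f h = (\<Sum>(x,a,y)\<leftarrow>h. nll (f x) y)"

definition regret :: "('x \<Rightarrow> real) set \<Rightarrow> ('x \<times> real \<times> bool) list \<Rightarrow> ereal" where
  "regret F h = learner_loss h - (INF f\<in>F. hyp_loss f h)"

fun game_val :: "('x \<Rightarrow> real) set \<Rightarrow> 'x set \<Rightarrow> nat \<Rightarrow> ('x \<times> real \<times> bool) list \<Rightarrow> ereal" where
  "game_val F X 0 h = regret F h"
| "game_val F X (Suc n) h =
     (SUP x\<in>X. INF a\<in>{0..1}. SUP y\<in>UNIV. game_val F X n (h @ [(x, a, y)]))"

definition minimax_regret :: "('x \<Rightarrow> real) set \<Rightarrow> 'x set \<Rightarrow> nat \<Rightarrow> ereal" where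
  "minimax_regret F X T = game_val F X T []"

definition minimax_regret_M :: "('x \<Rightarrow> real) set \<Rightarrow> nat \<Rightarrow> nat \<Rightarrow> ereal" where
  "minimax_regret_M F T M = (SUP X\<in>{X. finite X \<and> card X = M}. minimax_regret F X T)"

definition covering_number :: "('x \<Rightarrow> real) set \<Rightarrow> 'x set \<Rightarrow> real \<Rightarrow> nat" where
  "covering_number F Z eps =
     Inf {card C | C. finite C \<and> (\<forall>f\<in>F. \<exists>g\<in>C. \<forall>x\<in>Z. \<bar>f x - g x\<bar> \<le> eps)}"

end

theory Submission
  imports Defs
begin

definition sm :: "real \<Rightarrow> ('x \<Rightarrow> real) \<Rightarrow> 'x \<Rightarrow> real" where
  "sm e g x = (max 0 (min 1 (g x)) + e) / (1 + 2*e)"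

definition Lg :: "real \<Rightarrow> ('x \<Rightarrow> real) \<Rightarrow> ('x \<times> real \<times> bool) list \<Rightarrow> real" where
  "Lg e g h = (\<Sum>(x,a,y)\<leftarrow>h. - ln (prob_of (sm e g x) y))"

definition Sw :: "('x \<Rightarrow> real) set \<Rightarrow> real \<Rightarrow> ('x \<times> real \<times> bool) list \<Rightarrow> real" where
  "Sw C e h = (\<Sum>g\<in>C. exp (- Lg e g h))"

definition mix :: "('x \<Rightarrow> real) set \<Rightarrow> real \<Rightarrow> ('x \<times> real \<times> bool) list \<Rightarrow> 'x \<Rightarrow> real" where
  "mix C e h x = (\<Sum>g\<in>C. exp (- Lg e g h) * sm e g x) / Sw C e h"

lemma sm_bounds: assumes "e > 0" shows "0 < sm e g x" "sm e g x < 1"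
  using assms unfolding sm_def by (auto simp: field_simps)

lemma prob_sm_pos: assumes "e > 0" shows "0 < prob_of (sm e g x) y"
  using sm_bounds[OF assms, of g x] by (auto simp: prob_of_def)

lemma Lg_snoc: "Lg e g (h @ [(x,a,y)]) = Lg e g h - ln (prob_of (sm e g x) y)"
  unfolding Lg_def by simp

lemma Lg_Cons: "Lg e g ((x,a,y) # h) = - ln (prob_of (sm e g x) y) + Lg e g h"
  unfolding Lg_def by simp

lemma exp_Lg_snoc: assumes "e > 0"
  shows "exp (- Lg e g (h @ [(x,a,y)])) = exp (- Lg e g h) * prob_of (sm e g x) y"
proof -
  have p: "0 < prob_of (sm e g x) y" using prob_sm_pos[OF assms] .
  have "exp (- Lg e g (h @ [(x,a,y)])) = exp (- Lg e g h + ln (prob_of (sm e g x) y))" by (simp add: Lg_snoc)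
  also have "\<dots> = exp (- Lg e g h) * prob_of (sm e g x) y" by (simp only: exp_add exp_ln[OF p])
  finally show ?thesis .
qed

lemma Sw_pos: assumes "finite C" "C \<noteq> {}" shows "0 < Sw C e h"
  unfolding Sw_def using assms by (intro sum_pos) auto

lemma prob_mix: assumes "finite C" "C \<noteq> {}"
  shows "prob_of (mix C e h x) y = (\<Sum>g\<in>C. exp (- Lg e g h) * prob_of (sm e g x) y) / Sw C e h"
proof (cases y)
  case True then show ?thesis by (simp add: prob_of_def mix_def)
next
  case False
  have S: "Sw C e h > 0" using Sw_pos[OF assms] .
  have "(\<Sum>g\<in>C. exp (- Lg e g h) * (1 - sm e g x)) = Sw C e h - (\<Sum>g\<in>C. exp (- Lg e g h) * sm e g x)"
    by (simp add: Sw_def algebra_simps sum_subtractf)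
  then show ?thesis using False S by (simp add: prob_of_def mix_def field_simps)
qed

lemma Sw_snoc: assumes "finite C" "C \<noteq> {}" "e > 0"
  shows "Sw C e (h @ [(x, mix C e h x, y)]) = Sw C e h * prob_of (mix C e h x) y"
proof -
  have S: "Sw C e h > 0" using Sw_pos[OF assms(1,2)] .
  have "Sw C e (h @ [(x, mix C e h x, y)]) = (\<Sum>g\<in>C. exp (- Lg e g h) * prob_of (sm e g x) y)"
    by (simp add: Sw_def exp_Lg_snoc[OF assms(3)])
  then show ?thesis using S by (simp add: prob_mix[OF assms(1,2)])
qed

lemma prob_mix_pos: assumes "finite C" "C \<noteq> {}" "e > 0"
  shows "0 < prob_of (mix C e h x) y"
proof -
  have "0 < (\<Sum>g\<in>C. exp (- Lg e g h) * prob_of (sm e g x) y)"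
  proof (rule sum_pos)
    show "finite C" "C \<noteq> {}" by fact+
    fix g assume "g \<in> C"
    show "0 < exp (- Lg e g h) * prob_of (sm e g x) y"
      using prob_sm_pos[OF assms(3), of g x y] by simp
  qed
  then show ?thesis unfolding prob_mix[OF assms(1,2)] using Sw_pos[OF assms(1,2), of e h] by simp
qed

lemma mix_range: assumes "finite C" "C \<noteq> {}" "e > 0"
  shows "mix C e h x \<in> {0..1}"
  using prob_mix_pos[OF assms, of h x True] prob_mix_pos[OF assms, of h x False]
  by (simp add: prob_of_def)

lemma term_bound:
  assumes "e > 0" "0 \<le> f x" "f x \<le> 1" "\<bar>f x - g x\<bar> \<le> e"
  shows "ereal (- ln (prob_of (sm e g x) y) - ln (1 + 2*e)) \<le> nll (f x) y"
proof (cases "prob_of (f x) y = 0")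
  case True then show ?thesis by (simp add: nll_def)
next
  case False
  have p: "0 < prob_of (f x) y" using False assms by (auto simp: prob_of_def)
  have q: "0 < prob_of (sm e g x) y" using prob_sm_pos[OF assms(1)] .
  have le: "prob_of (f x) y \<le> prob_of (sm e g x) y * (1 + 2*e)"
  proof -
    define c where "c = max 0 (min 1 (g x))"
    have c: "f x - e \<le> c" "c \<le> f x + e" using assms unfolding c_def by (auto simp: max_def min_def)
    have "prob_of (sm e g x) y * (1 + 2*e) = (if y then c + e else 1 + e - c)"
    proof -
      have ne: "1 + 2*e \<noteq> 0" using assms(1) by simp
      show ?thesis unfolding prob_of_def sm_def c_def[symmetric] using ne
        by (cases y) (simp_all add: divide_simps)
    qed
    then show ?thesis using c by (auto simp: prob_of_def)
  qed
  have "ln (prob_of (f x) y) \<le> ln (prob_of (sm e g x) y * (1 + 2*e))"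
    using p le by simp
  also have "\<dots> = ln (prob_of (sm e g x) y) + ln (1 + 2*e)"
    using q assms by (simp add: ln_mult)
  finally show ?thesis using False by (simp add: nll_def)
qed

lemma hyp_bound:
  assumes "e > 0" "\<forall>x\<in>X. 0 \<le> f x \<and> f x \<le> 1 \<and> \<bar>f x - g x\<bar> \<le> e"
  shows "(\<forall>(x,a,y)\<in>set h. x \<in> X) \<Longrightarrow>
    ereal (Lg e g h - real (length h) * ln (1 + 2*e)) \<le> hyp_loss f h"
proof (induction h)
  case Nil then show ?case by (simp add: Lg_def hyp_loss_def)
next
  case (Cons p h)
  obtain x a y where p: "p = (x,a,y)" by (cases p)
  have x: "x \<in> X" using Cons.prems p by auto
  have IH: "ereal (Lg e g h - real (length h) * ln (1 + 2*e)) \<le> hyp_loss f h"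
    using Cons by auto
  have T: "ereal (- ln (prob_of (sm e g x) y) - ln (1 + 2*e)) \<le> nll (f x) y"
    using assms x by (intro term_bound) auto
  have "ereal (Lg e g (p#h) - real (length (p#h)) * ln (1 + 2*e)) =
     ereal (- ln (prob_of (sm e g x) y) - ln (1 + 2*e)) + ereal (Lg e g h - real (length h) * ln (1 + 2*e))"
    by (simp add: p Lg_Cons algebra_simps)
  also have "\<dots> \<le> nll (f x) y + hyp_loss f h" using T IH by (rule add_mono)
  also have "\<dots> = hyp_loss f (p#h)" by (simp add: p hyp_loss_def)
  finally show ?case .
qed

lemma learner_loss_snoc: "learner_loss (h @ [(x,a,y)]) = learner_loss h + nll a y"
  by (simp add: learner_loss_def)

lemma base_bound:
  assumes C: "finite C" "C \<noteq> {}" and e: "e > 0"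
    and F: "\<forall>f\<in>F. \<forall>x. 0 \<le> f x \<and> f x \<le> 1"
    and cov: "\<forall>f\<in>F. \<exists>g\<in>C. \<forall>x\<in>X. \<bar>f x - g x\<bar> \<le> e"
    and h: "\<forall>(x,a,y)\<in>set h. x \<in> X"
  shows "regret F h \<le> learner_loss h + ereal (ln (Sw C e h) + real (length h) * ln (1 + 2*e))"
proof -
  have "ereal (- (ln (Sw C e h) + real (length h) * ln (1 + 2*e))) \<le> (INF f\<in>F. hyp_loss f h)"
  proof (rule INF_greatest)
    fix f assume fF: "f \<in> F"
    obtain g where g: "g \<in> C" "\<forall>x\<in>X. \<bar>f x - g x\<bar> \<le> e" using cov fF by auto
    have "exp (- Lg e g h) \<le> Sw C e h" unfolding Sw_def
      using C g by (intro member_le_sum) auto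
    then have "ln (exp (- Lg e g h)) \<le> ln (Sw C e h)" using Sw_pos[OF C, of e h] by (subst ln_le_cancel_iff) auto
    then have "- (ln (Sw C e h) + real (length h) * ln (1 + 2*e)) \<le> Lg e g h - real (length h) * ln (1 + 2*e)"
      by simp
    also have "ereal \<dots> \<le> hyp_loss f h"
      using hyp_bound[OF e, of X f g h] F fF g h by auto
    finally show "ereal (- (ln (Sw C e h) + real (length h) * ln (1 + 2*e))) \<le> hyp_loss f h" by simp
  qed
  then have "regret F h \<le> learner_loss h - ereal (- (ln (Sw C e h) + real (length h) * ln (1 + 2*e)))"
    unfolding regret_def by (intro ereal_minus_mono) auto
  also have "\<dots> = learner_loss h + ereal (ln (Sw C e h) + real (length h) * ln (1 + 2*e))"
    by (simp add: minus_ereal_def add.commute)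
  finally show ?thesis .
qed

lemma game_bound:
  fixes X :: "'x set"
  assumes C: "finite C" "C \<noteq> {}" and e: "e > 0"
    and F: "\<forall>f\<in>F. \<forall>x. 0 \<le> f x \<and> f x \<le> 1"
    and cov: "\<forall>f\<in>F. \<exists>g\<in>C. \<forall>x\<in>X. \<bar>f x - g x\<bar> \<le> e"
  shows "\<forall>h::('x \<times> real \<times> bool) list. (\<forall>(x,a,y)\<in>set h. x \<in> X) \<longrightarrow> game_val F X n h \<le>
     learner_loss h + ereal (ln (Sw C e h) + real (length h + n) * ln (1 + 2*e))"
proof (induction n)
  case 0 show ?case
  proof (intro allI impI)
    fix h :: "('x \<times> real \<times> bool) list" assume "\<forall>(x,a,y)\<in>set h. x \<in> X"
    from base_bound[OF C e F cov this]
    show "game_val F X 0 h \<le> learner_loss h + ereal (ln (Sw C e h) + real (length h + 0) * ln (1 + 2*e))"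
      by simp
  qed
next
  case (Suc n)
  show ?case
  proof (intro allI impI)
    fix h :: "('x \<times> real \<times> bool) list" assume h: "\<forall>(x,a,y)\<in>set h. x \<in> X"
    let ?R = "learner_loss h + ereal (ln (Sw C e h) + real (length h + Suc n) * ln (1 + 2*e))"
    show "game_val F X (Suc n) h \<le> ?R"
      unfolding game_val.simps
    proof (rule SUP_least)
      fix x assume x: "x \<in> X"
      let ?m = "mix C e h x"
      have "(INF a\<in>{0..1}. SUP y\<in>UNIV. game_val F X n (h @ [(x, a, y)])) \<le>
            (SUP y\<in>UNIV. game_val F X n (h @ [(x, ?m, y)]))"
        using mix_range[OF C e] by (intro INF_lower) auto
      also have "\<dots> \<le> ?R"
      proof (rule SUP_least)
        fix y
        have p: "0 < prob_of ?m y" using prob_mix_pos[OF C e] .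
        have h': "\<forall>(x',a,y')\<in>set (h @ [(x, ?m, y)]). x' \<in> X" using h x by auto
        have "game_val F X n (h @ [(x, ?m, y)]) \<le> learner_loss (h @ [(x, ?m, y)]) +
           ereal (ln (Sw C e (h @ [(x, ?m, y)])) + real (length (h @ [(x, ?m, y)]) + n) * ln (1 + 2*e))"
          using Suc h' by blast
        also have "\<dots> = learner_loss h + ereal (- ln (prob_of ?m y)) +
           ereal (ln (Sw C e h) + ln (prob_of ?m y) + real (length h + Suc n) * ln (1 + 2*e))"
          using p Sw_pos[OF C, of e h]
          by (simp add: learner_loss_snoc nll_def Sw_snoc[OF C e] ln_mult algebra_simps)
        also have "\<dots> = ?R" by (simp add: add.assoc)
        finally show "game_val F X n (h @ [(x, ?m, y)]) \<le> ?R" .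
      qed
      finally show "(INF a\<in>{0..1}. SUP y\<in>UNIV. game_val F X n (h @ [(x, a, y)])) \<le> ?R" .
    qed
  qed
qed

lemma cover_exists:
  fixes X :: "'x set" and e :: real and F :: "('x \<Rightarrow> real) set"
  assumes X: "finite X" and e: "e > 0" and F: "\<forall>f\<in>F. \<forall>x. 0 \<le> f x \<and> f x \<le> 1"
  shows "\<exists>C. finite C \<and> (\<forall>f\<in>F. \<exists>g\<in>C. \<forall>x\<in>X. \<bar>f x - g x\<bar> \<le> e)"
proof -
  define G where "G = (\<lambda>j::int. e * of_int j) ` {0..ceiling (1/e)}"
  define C where "C = PiE X (\<lambda>_. G)"
  have "finite C" unfolding C_def G_def using X by (intro finite_PiE) auto
  moreover have "\<forall>f\<in>F. \<exists>g\<in>C. \<forall>x\<in>X. \<bar>f x - g x\<bar> \<le> e"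
  proof
    fix f assume fF: "f \<in> F"
    define g where "g = restrict (\<lambda>x. e * of_int (floor (f x / e))) X"
    have "g \<in> C" unfolding C_def g_def
    proof (rule restrict_PiE_iff[THEN iffD2], intro ballI)
      fix x assume "x \<in> X"
      have f01: "0 \<le> f x" "f x \<le> 1" using F fF by auto
      have "0 \<le> floor (f x / e)" using f01 e by simp
      moreover have "floor (f x / e) \<le> ceiling (1/e)"
      proof -
        have "f x / e \<le> 1 / e" using f01 e by (simp add: divide_right_mono)
        then have "floor (f x / e) \<le> floor (1/e)" by (rule floor_mono)
        also have "\<dots> \<le> ceiling (1/e)" by (rule floor_le_ceiling)
        finally show ?thesis .
      qed
      ultimately show "e * of_int (floor (f x / e)) \<in> G" unfolding G_def by auto
    qed
    moreover have "\<forall>x\<in>X. \<bar>f x - g x\<bar> \<le> e"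
    proof
      fix x assume x: "x \<in> X"
      have a: "of_int (floor (f x / e)) \<le> f x / e" by (rule of_int_floor_le)
      have b: "f x / e < of_int (floor (f x / e)) + 1" by (rule real_of_int_floor_add_one_gt)
      have "e * of_int (floor (f x / e)) \<le> e * (f x / e)" using e by (intro mult_left_mono[OF a]) simp
      then have a': "e * of_int (floor (f x / e)) \<le> f x" using e by simp
      have b': "f x < e * of_int (floor (f x / e)) + e" using b e by (simp add: field_simps)
      show "\<bar>f x - g x\<bar> \<le> e" using a' b' x unfolding g_def by simp
    qed
    ultimately show "\<exists>g\<in>C. \<forall>x\<in>X. \<bar>f x - g x\<bar> \<le> e" by blast
  qed
  ultimately show ?thesis by blast
qed

lemma Sw_Nil: "Sw C e [] = real (card C)"
  by (simp add: Sw_def Lg_def)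

lemma fixed_X_bound:
  fixes F :: "('x \<Rightarrow> real) set" and X :: "'x set"
  assumes F: "\<forall>f\<in>F. \<forall>x. 0 \<le> f x \<and> f x \<le> 1" and X: "finite X" and e: "e > 0"
  shows "minimax_regret F X T \<le> ereal (ln (real (covering_number F X e))) + ereal (2 * e * real T)"
proof -
  obtain C where C: "finite C" "C \<noteq> {}" "\<forall>f\<in>F. \<exists>g\<in>C. \<forall>x\<in>X. \<bar>f x - g x\<bar> \<le> e"
    and lnC: "ln (real (card C)) = ln (real (covering_number F X e))"
  proof (cases "F = {}")
    case True
    have "covering_number F X e = 0" unfolding covering_number_def
    proof (rule cInf_eq_minimum)
      show "0 \<in> {card C | C. finite C \<and> (\<forall>f\<in>F. \<exists>g\<in>C. \<forall>x\<in>X. \<bar>f x - g x\<bar> \<le> e)}"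
        using True by (auto intro!: exI[of _ "{}"])
    qed simp
    then show ?thesis using True by (intro that[of "{\<lambda>_. 0}"]) auto
  next
    case False
    let ?S = "{card C | C. finite C \<and> (\<forall>f\<in>F. \<exists>g\<in>C. \<forall>x\<in>X. \<bar>f x - g x\<bar> \<le> e)}"
    have "?S \<noteq> {}" using cover_exists[OF X e F] by auto
    then have "Inf ?S \<in> ?S" by (rule Inf_nat_def1)
    then obtain C where C: "finite C" "\<forall>f\<in>F. \<exists>g\<in>C. \<forall>x\<in>X. \<bar>f x - g x\<bar> \<le> e"
      "card C = covering_number F X e" unfolding covering_number_def by auto
    have "C \<noteq> {}" using C(2) False by auto
    then show ?thesis using C by (intro that[of C]) auto
  qed
  have "minimax_regret F X T \<le> learner_loss ([]::('x \<times> real \<times> bool) list) + ereal (ln (Sw C e []) + real (0 + T) * ln (1 + 2*e))"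
    unfolding minimax_regret_def using spec[OF game_bound[OF C(1,2) e F C(3), of T], of "[]"] by simp
  also have "\<dots> = ereal (ln (real (card C)) + real T * ln (1 + 2*e))"
    by (simp add: learner_loss_def Sw_Nil)
  also have "\<dots> \<le> ereal (ln (real (card C)) + 2 * e * real T)"
  proof -
    have "ln (1 + 2*e) \<le> 2*e" using e by (intro ln_add_one_self_le_self) simp
    then have "real T * ln (1 + 2*e) \<le> real T * (2*e)" by (intro mult_left_mono) auto
    then show ?thesis by (simp add: mult_ac)
  qed
  also have "\<dots> = ereal (ln (real (covering_number F X e))) + ereal (2 * e * real T)"
    using lnC by simp
  finally show ?thesis .
qed

theorem theorem3p2:
  fixes F :: "('x \<Rightarrow> real) set" and T k :: nat
  assumes "\<forall>f\<in>F. \<forall>x. 0 \<le> f x \<and> f x \<le> 1"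
    and "T \<ge> 1" and "k \<ge> 1"
  shows "minimax_regret_M F T (k * T) \<le>
    (INF eps\<in>{0<..}.
       (SUP Z\<in>{Z. finite Z \<and> card Z = k * T}. ereal (ln (real (covering_number F Z eps))))
       + ereal (2 * eps * real T))"
  unfolding minimax_regret_M_def
proof (rule INF_greatest, rule SUP_least)
  fix eps :: real and X :: "'x set" assume e: "eps \<in> {0<..}" and X: "X \<in> {X. finite X \<and> card X = k * T}"
  have "minimax_regret F X T \<le> ereal (ln (real (covering_number F X eps))) + ereal (2 * eps * real T)"
    using fixed_X_bound[OF assms(1), of X eps T] e X by auto
  also have "\<dots> \<le> (SUP Z\<in>{Z. finite Z \<and> card Z = k * T}. ereal (ln (real (covering_number F Z eps))))
       + ereal (2 * eps * real T)"
    using X by (intro add_right_mono SUP_upper) auto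
  finally show "minimax_regret F X T \<le> (SUP Z\<in>{Z. finite Z \<and> card Z = k * T}. ereal (ln (real (covering_number F Z eps))))
       + ereal (2 * eps * real T)" .
qed

end
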